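(* Let $\alpha\in\Phi_+$. Then: (a) the set $\Phi_+\setminus\operatorname{leg}(h_\alpha)$ is closed; (b) $V_\alpha:=\prod_{\gamma\in\Phi_+\setminus\operatorname{leg}(h_\alpha)}X_\gamma$ is a subgroup of $U$; (c) $X_\alpha\cap[V_\alpha,V_\alpha]=\{1\}$; (d) for each $s\in\mathbb{F}_q^\times$ there is a linear character $\lambda_{\alpha,s}$ of $V_\alpha$ with $\lambda_{\alpha,s}|_{X_\alpha}=\varphi_{\alpha,s}$ and $X_\gamma\subseteq\ker(\lambda_{\alpha,s})$ for every $\gamma\in\Phi_+$ with $\operatorname{ht}(\gamma)>\operatorname{ht}(\alpha)$.
   Context: $q$ is a power of a prime $p$. $\Phi$ is a root system of type $D_4$ with simple roots $\alpha_1,\alpha_2,\alpha_3,\alpha_4$ ($\alpha_3$ central node), positive roots $\Phi_+=\{\alpha_1,\dots,\alpha_{12}\}$ with $\alpha_5=\alpha_1+\alpha_3$, $\alpha_6=\alpha_2+\alpha_3$, $\alpha_7=\alpha_3+\alpha_4$, $\alpha_8=\alpha_1+\alpha_2+\alpha_3$, $\alpha_9=\alpha_1+\alpha_3+\alpha_4$, $\alpha_{10}=\alpha_2+\alpha_3+\alpha_4$, $\alpha_{11}=\alpha_1+\alpha_2+\alpha_3+\alpha_4$, $\alpha_{12}=\alpha_1+\alpha_2+2\alpha_3+\alpha_4$; $\operatorname{ht}$ is the height (sum of coefficients in the simple roots). A nonempty $S\subseteq\Phi$ is closed if for all $\alpha,\beta\in S$, either $\alpha+\beta\in S$ or $\alpha+\beta\notin\Phi$.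 $U=U(q)$ is the Sylow $p$-subgroup of the Chevalley group $D_4(q)$ generated by $x_i(t)$ ($i=1,\dots,12$, $t\in\mathbb{F}_q$), with $x_i(t)x_i(u)=x_i(t+u)$, each element uniquely $x_1(d_1)\cdots x_{12}(d_{12})$, and commutators ($[a,b]=a^{-1}b^{-1}ab$): $[x_1(t),x_3(u)]=x_5(tu)$, $[x_1(t),x_6(u)]=x_8(-tu)$, $[x_1(t),x_7(u)]=x_9(tu)$, $[x_1(t),x_{10}(u)]=x_{11}(-tu)$, $[x_2(t),x_3(u)]=x_6(tu)$, $[x_2(t),x_5(u)]=x_8(-tu)$, $[x_2(t),x_7(u)]=x_{10}(tu)$, $[x_2(t),x_9(u)]=x_{11}(-tu)$, $[x_3(t),x_4(u)]=x_7(tu)$, $[x_3(t),x_{11}(u)]=x_{12}(-tu)$, $[x_4(t),x_5(u)]=x_9(-tu)$, $[x_4(t),x_6(u)]=x_{10}(-tu)$, $[x_4(t),x_8(u)]=x_{11}(-tu)$, $[x_5(t),x_{10}(u)]=x_{12}(-tu)$, $[x_6(t),x_9(u)]=x_{12}(-tu)$, $[x_7(t),x_8(u)]=x_{12}(tu)$, others trivial. $X_{\alpha_i}=\{x_i(t)\}$. Fix a nontrivial linear character $\phi$ of $(\mathbb{F}_q,+)$ and define $\varphi_{\alpha_i,s}:X_{\alpha_i}\to\mathbb{C}^\times$, $x_i(d)\mapsto\phi(sd)$. Hooks: $h_\alpha=\{\gamma\in\Phi_+ : \exists\,\gamma'\in\Phi_+\cup\{0\},\ \gamma+\gamma'=\alpha\}$.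 Arm: $\operatorname{arm}(h_\alpha)=(h_\alpha\cap h_{\alpha_{12}})\setminus\{\alpha\}$ if $\alpha\ne\alpha_{12}$, and $\operatorname{arm}(h_{\alpha_{12}})=\{\alpha_8,\alpha_9,\alpha_{10},\alpha_{11}\}$. Leg: $\operatorname{leg}(h_\alpha)=h_\alpha\setminus(\operatorname{arm}(h_\alpha)\cup\{\alpha\})$. Products of root subgroups over a set of roots are taken in any fixed order. *)

theory Defs
  imports "HOL-Algebra.Algebra" Complex_Main
begin

section \<open>The root system D4 (positive roots indexed 1..12, coefficients w.r.t. simple roots)\<close>

definition pos_root :: "nat \<Rightarrow> int list" where
  "pos_root i = (
     if i = 1 then [1,0,0,0] else if i = 2 then [0,1,0,0] else
     if i = 3 then [0,0,1,0] else if i = 4 then [0,0,0,1] else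
     if i = 5 then [1,0,1,0] else if i = 6 then [0,1,1,0] else
     if i = 7 then [0,0,1,1] else if i = 8 then [1,1,1,0] else
     if i = 9 then [1,0,1,1] else if i = 10 then [0,1,1,1] else
     if i = 11 then [1,1,1,1] else if i = 12 then [1,1,2,1] else [0,0,0,0])"

definition radd :: "int list \<Rightarrow> int list \<Rightarrow> int list" where
  "radd a b = map2 (+) a b"

definition rzero :: "int list" where "rzero = [0,0,0,0]"

definition Phi_plus :: "int list set" where
  "Phi_plus = pos_root ` {1..12}"

definition Phi :: "int list set" where
  "Phi = Phi_plus \<union> (map uminus) ` Phi_plus"

definition ht :: "int list \<Rightarrow> int" where
  "ht r = sum_list r"

definition closed :: "int list set \<Rightarrow> bool" where
  "closed S \<longleftrightarrow> S \<noteq> {} \<and> S \<subseteq> Phi \<and>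
     (\<forall>a\<in>S. \<forall>b\<in>S. radd a b \<in> S \<or> radd a b \<notin> Phi)"

definition hook :: "int list \<Rightarrow> int list set" where
  "hook \<alpha> = {\<gamma>\<in>Phi_plus. \<exists>\<gamma>'\<in>Phi_plus \<union> {rzero}. radd \<gamma> \<gamma>' = \<alpha>}"

definition arm :: "int list \<Rightarrow> int list set" where
  "arm \<alpha> = (if \<alpha> = pos_root 12 then pos_root ` {8,9,10,11}
            else (hook \<alpha> \<inter> hook (pos_root 12)) - {\<alpha>})"

definition leg :: "int list \<Rightarrow> int list set" where
  "leg \<alpha> = hook \<alpha> - (arm \<alpha> \<union> {\<alpha>})"

definition comm :: "('g, 'b) monoid_scheme \<Rightarrow> 'g \<Rightarrow> 'g \<Rightarrow> 'g" where
  "comm G a b = inv\<^bsub>G\<^esub> a \<otimes>\<^bsub>G\<^esub> inv\<^bsub>G\<^esub> b \<otimes>\<^bsub>G\<^esub> a \<otimes>\<^bsub>G\<^esub> b"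

text \<open>Commutator table for i < j: [x_i(t), x_j(u)] = x_k(c t u); None means trivial.\<close>
definition crel :: "nat \<Rightarrow> nat \<Rightarrow> (nat \<times> int) option" where
  "crel i j = (
     if (i,j) = (1,3) then Some (5,1) else if (i,j) = (1,6) then Some (8,-1) else
     if (i,j) = (1,7) then Some (9,1) else if (i,j) = (1,10) then Some (11,-1) else
     if (i,j) = (2,3) then Some (6,1) else if (i,j) = (2,5) then Some (8,-1) else
     if (i,j) = (2,7) then Some (10,1) else if (i,j) = (2,9) then Some (11,-1) else
     if (i,j) = (3,4) then Some (7,1) else if (i,j) = (3,11) then Some (12,-1) else
     if (i,j) = (4,5) then Some (9,-1) else if (i,j) = (4,6) then Some (10,-1) else
     if (i,j) = (4,8) then Some (11,-1) else if (i,j) = (5,10) then Some (12,-1) else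
     if (i,j) = (6,9) then Some (12,-1) else if (i,j) = (7,8) then Some (12,1) else None)"

definition rprod :: "('g, 'b) monoid_scheme \<Rightarrow> (nat \<Rightarrow> 'a \<Rightarrow> 'g) \<Rightarrow> nat list \<Rightarrow> (nat \<Rightarrow> 'a) \<Rightarrow> 'g" where
  "rprod G x is d = foldr (\<lambda>i acc. x i (d i) \<otimes>\<^bsub>G\<^esub> acc) is \<one>\<^bsub>G\<^esub>"

definition is_U_D4 :: "('g, 'b) monoid_scheme \<Rightarrow> (nat \<Rightarrow> 'a::field \<Rightarrow> 'g) \<Rightarrow> bool" where
  "is_U_D4 G x \<longleftrightarrow> group G \<and>
     (\<forall>i\<in>{1..12}. \<forall>t. x i t \<in> carrier G) \<and>
     (\<forall>i\<in>{1..12}. \<forall>t u. x i (t + u) = x i t \<otimes>\<^bsub>G\<^esub> x i u) \<and>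
     (\<forall>i j t u. 1 \<le> i \<and> i < j \<and> j \<le> 12 \<longrightarrow>
        comm G (x i t) (x j u) =
          (case crel i j of None \<Rightarrow> \<one>\<^bsub>G\<^esub> | Some (k, c) \<Rightarrow> x k (of_int c * t * u))) \<and>
     bij_betw (rprod G x [1..<13]) {d. \<forall>i. i \<notin> {1..12} \<longrightarrow> d i = 0} (carrier G)"

definition Xsub :: "(nat \<Rightarrow> 'a \<Rightarrow> 'g) \<Rightarrow> nat \<Rightarrow> 'g set" where
  "Xsub x i = range (x i)"

definition rootprod :: "('g, 'b) monoid_scheme \<Rightarrow> (nat \<Rightarrow> 'a \<Rightarrow> 'g) \<Rightarrow> int list set \<Rightarrow> 'g set" where
  "rootprod G x S = {rprod G x (filter (\<lambda>i. pos_root i \<in> S) [1..<13]) d | d. True}"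

definition nontriv_add_char :: "('a::field \<Rightarrow> complex) \<Rightarrow> bool" where
  "nontriv_add_char \<phi> \<longleftrightarrow> (\<forall>a b. \<phi> (a + b) = \<phi> a * \<phi> b) \<and> (\<forall>a. \<phi> a \<noteq> 0) \<and> (\<exists>a. \<phi> a \<noteq> 1)"

definition lin_char :: "('g, 'b) monoid_scheme \<Rightarrow> 'g set \<Rightarrow> ('g \<Rightarrow> complex) \<Rightarrow> bool" where
  "lin_char G V chi \<longleftrightarrow> (\<forall>g\<in>V. chi g \<noteq> 0) \<and> (\<forall>g\<in>V. \<forall>h\<in>V. chi (g \<otimes>\<^bsub>G\<^esub> h) = chi g * chi h)"

end

theory Submission
  imports Defs
begin

locale UD4 =
  fixes G :: "('g, 'b) monoid_scheme" (structure) and x :: "nat \<Rightarrow> 'a::field \<Rightarrow> 'g"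
  assumes U: "is_U_D4 G x"
begin

sublocale group G using U unfolding is_U_D4_def by blast

lemma xc[simp]: "i \<in> {1..12} \<Longrightarrow> x i t \<in> carrier G"
  using U unfolding is_U_D4_def by blast

lemma xadd: "i \<in> {1..12} \<Longrightarrow> x i (t + u) = x i t \<otimes> x i u"
  using U unfolding is_U_D4_def by blast

lemma x0: "i \<in> {1..12} \<Longrightarrow> x i 0 = \<one>"
proof -
  assume i: "i \<in> {1..12}"
  have "x i 0 \<otimes> x i 0 = x i 0 \<otimes> \<one>" using xadd[OF i, of 0 0] i by simp
  then show ?thesis using i by (metis l_cancel one_closed xc)
qed

lemma xinv: "i \<in> {1..12} \<Longrightarrow> inv (x i t) = x i (- t)"
  by (metis add.right_inverse inv_equality x0 xadd xc add.left_inverse)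

lemma commrel: "1 \<le> i \<Longrightarrow> i < j \<Longrightarrow> j \<le> 12 \<Longrightarrow>
   comm G (x i t) (x j u) = (case crel i j of None \<Rightarrow> \<one> | Some (k, c) \<Rightarrow> x k (of_int c * t * u))"
  using U unfolding is_U_D4_def by blast

lemma swap_gen: assumes "a \<in> carrier G" "b \<in> carrier G" "comm G a b = z"
  shows "b \<otimes> a = a \<otimes> (b \<otimes> inv z)"
proof -
  have z: "z = inv a \<otimes> inv b \<otimes> a \<otimes> b" using assms(3) by (simp add: comm_def)
  have "a \<otimes> (b \<otimes> inv z) = a \<otimes> (b \<otimes> (inv b \<otimes> inv a \<otimes> b \<otimes> a))"
    using assms by (simp add: z inv_mult_group m_assoc)
  also have "\<dots> = b \<otimes> a" using assms by (simp add: m_assoc[symmetric])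
  finally show ?thesis by simp
qed

lemma swap_none: "1 \<le> i \<Longrightarrow> i < j \<Longrightarrow> j \<le> 12 \<Longrightarrow> crel i j = None \<Longrightarrow>
   x j u \<otimes> x i t = x i t \<otimes> x j u"
  using swap_gen[OF xc[of i t] xc[of j u] commrel[of i j t u]] by simp

lemma swap_some: "1 \<le> i \<Longrightarrow> i < j \<Longrightarrow> j \<le> 12 \<Longrightarrow> crel i j = Some (k, c) \<Longrightarrow> k \<in> {1..12} \<Longrightarrow>
   x j u \<otimes> x i t = x i t \<otimes> (x j u \<otimes> x k (- (of_int c * t * u)))"
  using swap_gen[OF xc[of i t] xc[of j u] commrel[of i j t u]] by (simp add: xinv)

lemma lift: "a \<otimes> b = c \<Longrightarrow> a \<in> carrier G \<Longrightarrow> b \<in> carrier G \<Longrightarrow> r \<in> carrier G \<Longrightarrow>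
   a \<otimes> (b \<otimes> r) = c \<otimes> r"
  by (simp add: m_assoc[symmetric])

lemma cm_1_2: "x 2 u \<otimes> x 1 t = x 1 t \<otimes> x 2 u"
  using swap_none[of 1 2 u t] by (simp add: crel_def)

lemmas cm_1_2r = lift[OF cm_1_2]

lemma cm_1_3: "x 3 u \<otimes> x 1 t = x 1 t \<otimes> (x 3 u \<otimes> x 5 (- (t * u)))"
  using swap_some[of 1 3 5 "1" u t] by (simp add: crel_def)

lemmas cm_1_3r = lift[OF cm_1_3]

lemma cm_1_4: "x 4 u \<otimes> x 1 t = x 1 t \<otimes> x 4 u"
  using swap_none[of 1 4 u t] by (simp add: crel_def)

lemmas cm_1_4r = lift[OF cm_1_4]

lemma cm_1_5: "x 5 u \<otimes> x 1 t = x 1 t \<otimes> x 5 u"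
  using swap_none[of 1 5 u t] by (simp add: crel_def)

lemmas cm_1_5r = lift[OF cm_1_5]

lemma cm_1_6: "x 6 u \<otimes> x 1 t = x 1 t \<otimes> (x 6 u \<otimes> x 8 (t * u))"
  using swap_some[of 1 6 8 "-1" u t] by (simp add: crel_def)

lemmas cm_1_6r = lift[OF cm_1_6]

lemma cm_1_7: "x 7 u \<otimes> x 1 t = x 1 t \<otimes> (x 7 u \<otimes> x 9 (- (t * u)))"
  using swap_some[of 1 7 9 "1" u t] by (simp add: crel_def)

lemmas cm_1_7r = lift[OF cm_1_7]

lemma cm_1_8: "x 8 u \<otimes> x 1 t = x 1 t \<otimes> x 8 u"
  using swap_none[of 1 8 u t] by (simp add: crel_def)

lemmas cm_1_8r = lift[OF cm_1_8]

lemma cm_1_9: "x 9 u \<otimes> x 1 t = x 1 t \<otimes> x 9 u"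
  using swap_none[of 1 9 u t] by (simp add: crel_def)

lemmas cm_1_9r = lift[OF cm_1_9]

lemma cm_1_10: "x 10 u \<otimes> x 1 t = x 1 t \<otimes> (x 10 u \<otimes> x 11 (t * u))"
  using swap_some[of 1 10 11 "-1" u t] by (simp add: crel_def)

lemmas cm_1_10r = lift[OF cm_1_10]

lemma cm_1_11: "x 11 u \<otimes> x 1 t = x 1 t \<otimes> x 11 u"
  using swap_none[of 1 11 u t] by (simp add: crel_def)

lemmas cm_1_11r = lift[OF cm_1_11]

lemma cm_1_12: "x 12 u \<otimes> x 1 t = x 1 t \<otimes> x 12 u"
  using swap_none[of 1 12 u t] by (simp add: crel_def)

lemmas cm_1_12r = lift[OF cm_1_12]

lemma cm_2_3: "x 3 u \<otimes> x 2 t = x 2 t \<otimes> (x 3 u \<otimes> x 6 (- (t * u)))"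
  using swap_some[of 2 3 6 "1" u t] by (simp add: crel_def)

lemmas cm_2_3r = lift[OF cm_2_3]

lemma cm_2_4: "x 4 u \<otimes> x 2 t = x 2 t \<otimes> x 4 u"
  using swap_none[of 2 4 u t] by (simp add: crel_def)

lemmas cm_2_4r = lift[OF cm_2_4]

lemma cm_2_5: "x 5 u \<otimes> x 2 t = x 2 t \<otimes> (x 5 u \<otimes> x 8 (t * u))"
  using swap_some[of 2 5 8 "-1" u t] by (simp add: crel_def)

lemmas cm_2_5r = lift[OF cm_2_5]

lemma cm_2_6: "x 6 u \<otimes> x 2 t = x 2 t \<otimes> x 6 u"
  using swap_none[of 2 6 u t] by (simp add: crel_def)

lemmas cm_2_6r = lift[OF cm_2_6]

lemma cm_2_7: "x 7 u \<otimes> x 2 t = x 2 t \<otimes> (x 7 u \<otimes> x 10 (- (t * u)))"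
  using swap_some[of 2 7 10 "1" u t] by (simp add: crel_def)

lemmas cm_2_7r = lift[OF cm_2_7]

lemma cm_2_8: "x 8 u \<otimes> x 2 t = x 2 t \<otimes> x 8 u"
  using swap_none[of 2 8 u t] by (simp add: crel_def)

lemmas cm_2_8r = lift[OF cm_2_8]

lemma cm_2_9: "x 9 u \<otimes> x 2 t = x 2 t \<otimes> (x 9 u \<otimes> x 11 (t * u))"
  using swap_some[of 2 9 11 "-1" u t] by (simp add: crel_def)

lemmas cm_2_9r = lift[OF cm_2_9]

lemma cm_2_10: "x 10 u \<otimes> x 2 t = x 2 t \<otimes> x 10 u"
  using swap_none[of 2 10 u t] by (simp add: crel_def)

lemmas cm_2_10r = lift[OF cm_2_10]

lemma cm_2_11: "x 11 u \<otimes> x 2 t = x 2 t \<otimes> x 11 u"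
  using swap_none[of 2 11 u t] by (simp add: crel_def)

lemmas cm_2_11r = lift[OF cm_2_11]

lemma cm_2_12: "x 12 u \<otimes> x 2 t = x 2 t \<otimes> x 12 u"
  using swap_none[of 2 12 u t] by (simp add: crel_def)

lemmas cm_2_12r = lift[OF cm_2_12]

lemma cm_3_4: "x 4 u \<otimes> x 3 t = x 3 t \<otimes> (x 4 u \<otimes> x 7 (- (t * u)))"
  using swap_some[of 3 4 7 "1" u t] by (simp add: crel_def)

lemmas cm_3_4r = lift[OF cm_3_4]

lemma cm_3_5: "x 5 u \<otimes> x 3 t = x 3 t \<otimes> x 5 u"
  using swap_none[of 3 5 u t] by (simp add: crel_def)

lemmas cm_3_5r = lift[OF cm_3_5]

lemma cm_3_6: "x 6 u \<otimes> x 3 t = x 3 t \<otimes> x 6 u"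
  using swap_none[of 3 6 u t] by (simp add: crel_def)

lemmas cm_3_6r = lift[OF cm_3_6]

lemma cm_3_7: "x 7 u \<otimes> x 3 t = x 3 t \<otimes> x 7 u"
  using swap_none[of 3 7 u t] by (simp add: crel_def)

lemmas cm_3_7r = lift[OF cm_3_7]

lemma cm_3_8: "x 8 u \<otimes> x 3 t = x 3 t \<otimes> x 8 u"
  using swap_none[of 3 8 u t] by (simp add: crel_def)

lemmas cm_3_8r = lift[OF cm_3_8]

lemma cm_3_9: "x 9 u \<otimes> x 3 t = x 3 t \<otimes> x 9 u"
  using swap_none[of 3 9 u t] by (simp add: crel_def)

lemmas cm_3_9r = lift[OF cm_3_9]

lemma cm_3_10: "x 10 u \<otimes> x 3 t = x 3 t \<otimes> x 10 u"
  using swap_none[of 3 10 u t] by (simp add: crel_def)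

lemmas cm_3_10r = lift[OF cm_3_10]

lemma cm_3_11: "x 11 u \<otimes> x 3 t = x 3 t \<otimes> (x 11 u \<otimes> x 12 (t * u))"
  using swap_some[of 3 11 12 "-1" u t] by (simp add: crel_def)

lemmas cm_3_11r = lift[OF cm_3_11]

lemma cm_3_12: "x 12 u \<otimes> x 3 t = x 3 t \<otimes> x 12 u"
  using swap_none[of 3 12 u t] by (simp add: crel_def)

lemmas cm_3_12r = lift[OF cm_3_12]

lemma cm_4_5: "x 5 u \<otimes> x 4 t = x 4 t \<otimes> (x 5 u \<otimes> x 9 (t * u))"
  using swap_some[of 4 5 9 "-1" u t] by (simp add: crel_def)

lemmas cm_4_5r = lift[OF cm_4_5]

lemma cm_4_6: "x 6 u \<otimes> x 4 t = x 4 t \<otimes> (x 6 u \<otimes> x 10 (t * u))"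
  using swap_some[of 4 6 10 "-1" u t] by (simp add: crel_def)

lemmas cm_4_6r = lift[OF cm_4_6]

lemma cm_4_7: "x 7 u \<otimes> x 4 t = x 4 t \<otimes> x 7 u"
  using swap_none[of 4 7 u t] by (simp add: crel_def)

lemmas cm_4_7r = lift[OF cm_4_7]

lemma cm_4_8: "x 8 u \<otimes> x 4 t = x 4 t \<otimes> (x 8 u \<otimes> x 11 (t * u))"
  using swap_some[of 4 8 11 "-1" u t] by (simp add: crel_def)

lemmas cm_4_8r = lift[OF cm_4_8]

lemma cm_4_9: "x 9 u \<otimes> x 4 t = x 4 t \<otimes> x 9 u"
  using swap_none[of 4 9 u t] by (simp add: crel_def)

lemmas cm_4_9r = lift[OF cm_4_9]

lemma cm_4_10: "x 10 u \<otimes> x 4 t = x 4 t \<otimes> x 10 u"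
  using swap_none[of 4 10 u t] by (simp add: crel_def)

lemmas cm_4_10r = lift[OF cm_4_10]

lemma cm_4_11: "x 11 u \<otimes> x 4 t = x 4 t \<otimes> x 11 u"
  using swap_none[of 4 11 u t] by (simp add: crel_def)

lemmas cm_4_11r = lift[OF cm_4_11]

lemma cm_4_12: "x 12 u \<otimes> x 4 t = x 4 t \<otimes> x 12 u"
  using swap_none[of 4 12 u t] by (simp add: crel_def)

lemmas cm_4_12r = lift[OF cm_4_12]

lemma cm_5_6: "x 6 u \<otimes> x 5 t = x 5 t \<otimes> x 6 u"
  using swap_none[of 5 6 u t] by (simp add: crel_def)

lemmas cm_5_6r = lift[OF cm_5_6]

lemma cm_5_7: "x 7 u \<otimes> x 5 t = x 5 t \<otimes> x 7 u"
  using swap_none[of 5 7 u t] by (simp add: crel_def)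

lemmas cm_5_7r = lift[OF cm_5_7]

lemma cm_5_8: "x 8 u \<otimes> x 5 t = x 5 t \<otimes> x 8 u"
  using swap_none[of 5 8 u t] by (simp add: crel_def)

lemmas cm_5_8r = lift[OF cm_5_8]

lemma cm_5_9: "x 9 u \<otimes> x 5 t = x 5 t \<otimes> x 9 u"
  using swap_none[of 5 9 u t] by (simp add: crel_def)

lemmas cm_5_9r = lift[OF cm_5_9]

lemma cm_5_10: "x 10 u \<otimes> x 5 t = x 5 t \<otimes> (x 10 u \<otimes> x 12 (t * u))"
  using swap_some[of 5 10 12 "-1" u t] by (simp add: crel_def)

lemmas cm_5_10r = lift[OF cm_5_10]

lemma cm_5_11: "x 11 u \<otimes> x 5 t = x 5 t \<otimes> x 11 u"
  using swap_none[of 5 11 u t] by (simp add: crel_def)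

lemmas cm_5_11r = lift[OF cm_5_11]

lemma cm_5_12: "x 12 u \<otimes> x 5 t = x 5 t \<otimes> x 12 u"
  using swap_none[of 5 12 u t] by (simp add: crel_def)

lemmas cm_5_12r = lift[OF cm_5_12]

lemma cm_6_7: "x 7 u \<otimes> x 6 t = x 6 t \<otimes> x 7 u"
  using swap_none[of 6 7 u t] by (simp add: crel_def)

lemmas cm_6_7r = lift[OF cm_6_7]

lemma cm_6_8: "x 8 u \<otimes> x 6 t = x 6 t \<otimes> x 8 u"
  using swap_none[of 6 8 u t] by (simp add: crel_def)

lemmas cm_6_8r = lift[OF cm_6_8]

lemma cm_6_9: "x 9 u \<otimes> x 6 t = x 6 t \<otimes> (x 9 u \<otimes> x 12 (t * u))"
  using swap_some[of 6 9 12 "-1" u t] by (simp add: crel_def)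

lemmas cm_6_9r = lift[OF cm_6_9]

lemma cm_6_10: "x 10 u \<otimes> x 6 t = x 6 t \<otimes> x 10 u"
  using swap_none[of 6 10 u t] by (simp add: crel_def)

lemmas cm_6_10r = lift[OF cm_6_10]

lemma cm_6_11: "x 11 u \<otimes> x 6 t = x 6 t \<otimes> x 11 u"
  using swap_none[of 6 11 u t] by (simp add: crel_def)

lemmas cm_6_11r = lift[OF cm_6_11]

lemma cm_6_12: "x 12 u \<otimes> x 6 t = x 6 t \<otimes> x 12 u"
  using swap_none[of 6 12 u t] by (simp add: crel_def)

lemmas cm_6_12r = lift[OF cm_6_12]

lemma cm_7_8: "x 8 u \<otimes> x 7 t = x 7 t \<otimes> (x 8 u \<otimes> x 12 (- (t * u)))"
  using swap_some[of 7 8 12 "1" u t] by (simp add: crel_def)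

lemmas cm_7_8r = lift[OF cm_7_8]

lemma cm_7_9: "x 9 u \<otimes> x 7 t = x 7 t \<otimes> x 9 u"
  using swap_none[of 7 9 u t] by (simp add: crel_def)

lemmas cm_7_9r = lift[OF cm_7_9]

lemma cm_7_10: "x 10 u \<otimes> x 7 t = x 7 t \<otimes> x 10 u"
  using swap_none[of 7 10 u t] by (simp add: crel_def)

lemmas cm_7_10r = lift[OF cm_7_10]

lemma cm_7_11: "x 11 u \<otimes> x 7 t = x 7 t \<otimes> x 11 u"
  using swap_none[of 7 11 u t] by (simp add: crel_def)

lemmas cm_7_11r = lift[OF cm_7_11]

lemma cm_7_12: "x 12 u \<otimes> x 7 t = x 7 t \<otimes> x 12 u"
  using swap_none[of 7 12 u t] by (simp add: crel_def)

lemmas cm_7_12r = lift[OF cm_7_12]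

lemma cm_8_9: "x 9 u \<otimes> x 8 t = x 8 t \<otimes> x 9 u"
  using swap_none[of 8 9 u t] by (simp add: crel_def)

lemmas cm_8_9r = lift[OF cm_8_9]

lemma cm_8_10: "x 10 u \<otimes> x 8 t = x 8 t \<otimes> x 10 u"
  using swap_none[of 8 10 u t] by (simp add: crel_def)

lemmas cm_8_10r = lift[OF cm_8_10]

lemma cm_8_11: "x 11 u \<otimes> x 8 t = x 8 t \<otimes> x 11 u"
  using swap_none[of 8 11 u t] by (simp add: crel_def)

lemmas cm_8_11r = lift[OF cm_8_11]

lemma cm_8_12: "x 12 u \<otimes> x 8 t = x 8 t \<otimes> x 12 u"
  using swap_none[of 8 12 u t] by (simp add: crel_def)

lemmas cm_8_12r = lift[OF cm_8_12]

lemma cm_9_10: "x 10 u \<otimes> x 9 t = x 9 t \<otimes> x 10 u"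
  using swap_none[of 9 10 u t] by (simp add: crel_def)

lemmas cm_9_10r = lift[OF cm_9_10]

lemma cm_9_11: "x 11 u \<otimes> x 9 t = x 9 t \<otimes> x 11 u"
  using swap_none[of 9 11 u t] by (simp add: crel_def)

lemmas cm_9_11r = lift[OF cm_9_11]

lemma cm_9_12: "x 12 u \<otimes> x 9 t = x 9 t \<otimes> x 12 u"
  using swap_none[of 9 12 u t] by (simp add: crel_def)

lemmas cm_9_12r = lift[OF cm_9_12]

lemma cm_10_11: "x 11 u \<otimes> x 10 t = x 10 t \<otimes> x 11 u"
  using swap_none[of 10 11 u t] by (simp add: crel_def)

lemmas cm_10_11r = lift[OF cm_10_11]

lemma cm_10_12: "x 12 u \<otimes> x 10 t = x 10 t \<otimes> x 12 u"
  using swap_none[of 10 12 u t] by (simp add: crel_def)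

lemmas cm_10_12r = lift[OF cm_10_12]

lemma cm_11_12: "x 12 u \<otimes> x 11 t = x 11 t \<otimes> x 12 u"
  using swap_none[of 11 12 u t] by (simp add: crel_def)

lemmas cm_11_12r = lift[OF cm_11_12]

lemma mg_1: "x 1 t \<otimes> x 1 u = x 1 (t + u)" using xadd[of 1 t u] by simp

lemmas mg_1r = lift[OF mg_1]

lemma x0_1: "x 1 0 = \<one>" by (rule x0) simp

lemma mg_2: "x 2 t \<otimes> x 2 u = x 2 (t + u)" using xadd[of 2 t u] by simp

lemmas mg_2r = lift[OF mg_2]

lemma x0_2: "x 2 0 = \<one>" by (rule x0) simp

lemma mg_3: "x 3 t \<otimes> x 3 u = x 3 (t + u)" using xadd[of 3 t u] by simp

lemmas mg_3r = lift[OF mg_3]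

lemma x0_3: "x 3 0 = \<one>" by (rule x0) simp

lemma mg_4: "x 4 t \<otimes> x 4 u = x 4 (t + u)" using xadd[of 4 t u] by simp

lemmas mg_4r = lift[OF mg_4]

lemma x0_4: "x 4 0 = \<one>" by (rule x0) simp

lemma mg_5: "x 5 t \<otimes> x 5 u = x 5 (t + u)" using xadd[of 5 t u] by simp

lemmas mg_5r = lift[OF mg_5]

lemma x0_5: "x 5 0 = \<one>" by (rule x0) simp

lemma mg_6: "x 6 t \<otimes> x 6 u = x 6 (t + u)" using xadd[of 6 t u] by simp

lemmas mg_6r = lift[OF mg_6]

lemma x0_6: "x 6 0 = \<one>" by (rule x0) simp

lemma mg_7: "x 7 t \<otimes> x 7 u = x 7 (t + u)" using xadd[of 7 t u] by simp

lemmas mg_7r = lift[OF mg_7]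

lemma x0_7: "x 7 0 = \<one>" by (rule x0) simp

lemma mg_8: "x 8 t \<otimes> x 8 u = x 8 (t + u)" using xadd[of 8 t u] by simp

lemmas mg_8r = lift[OF mg_8]

lemma x0_8: "x 8 0 = \<one>" by (rule x0) simp

lemma mg_9: "x 9 t \<otimes> x 9 u = x 9 (t + u)" using xadd[of 9 t u] by simp

lemmas mg_9r = lift[OF mg_9]

lemma x0_9: "x 9 0 = \<one>" by (rule x0) simp

lemma mg_10: "x 10 t \<otimes> x 10 u = x 10 (t + u)" using xadd[of 10 t u] by simp

lemmas mg_10r = lift[OF mg_10]

lemma x0_10: "x 10 0 = \<one>" by (rule x0) simp

lemma mg_11: "x 11 t \<otimes> x 11 u = x 11 (t + u)" using xadd[of 11 t u] by simp

lemmas mg_11r = lift[OF mg_11]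

lemma x0_11: "x 11 0 = \<one>" by (rule x0) simp

lemma mg_12: "x 12 t \<otimes> x 12 u = x 12 (t + u)" using xadd[of 12 t u] by simp

lemmas mg_12r = lift[OF mg_12]

lemma x0_12: "x 12 0 = \<one>" by (rule x0) simp

lemmas collect = cm_1_2 cm_1_2r cm_1_3 cm_1_3r cm_1_4 cm_1_4r cm_1_5 cm_1_5r cm_1_6 cm_1_6r cm_1_7 cm_1_7r cm_1_8 cm_1_8r cm_1_9 cm_1_9r cm_1_10 cm_1_10r cm_1_11 cm_1_11r cm_1_12 cm_1_12r cm_2_3 cm_2_3r cm_2_4 cm_2_4r cm_2_5 cm_2_5r cm_2_6 cm_2_6r cm_2_7 cm_2_7r cm_2_8 cm_2_8r cm_2_9 cm_2_9r cm_2_10 cm_2_10r cm_2_11 cm_2_11r cm_2_12 cm_2_12r cm_3_4 cm_3_4r cm_3_5 cm_3_5r cm_3_6 cm_3_6r cm_3_7 cm_3_7r cm_3_8 cm_3_8r cm_3_9 cm_3_9r cm_3_10 cm_3_10r cm_3_11 cm_3_11r cm_3_12 cm_3_12r cm_4_5 cm_4_5r cm_4_6 cm_4_6r cm_4_7 cm_4_7r cm_4_8 cm_4_8r cm_4_9 cm_4_9r cm_4_10 cm_4_10r cm_4_11 cm_4_11r cm_4_12 cm_4_12r cm_5_6 cm_5_6r cm_5_7 cm_5_7r cm_5_8 cm_5_8r cm_5_9 cm_5_9r cm_5_10 cm_5_10r cm_5_11 cm_5_11r cm_5_12 cm_5_12r cm_6_7 cm_6_7r cm_6_8 cm_6_8r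 cm_6_9 cm_6_9r cm_6_10 cm_6_10r cm_6_11 cm_6_11r cm_6_12 cm_6_12r cm_7_8 cm_7_8r cm_7_9 cm_7_9r cm_7_10 cm_7_10r cm_7_11 cm_7_11r cm_7_12 cm_7_12r cm_8_9 cm_8_9r cm_8_10 cm_8_10r cm_8_11 cm_8_11r cm_8_12 cm_8_12r cm_9_10 cm_9_10r cm_9_11 cm_9_11r cm_9_12 cm_9_12r cm_10_11 cm_10_11r cm_10_12 cm_10_12r cm_11_12 cm_11_12r mg_1 mg_1r x0_1 mg_2 mg_2r x0_2 mg_3 mg_3r x0_3 mg_4 mg_4r x0_4 mg_5 mg_5r x0_5 mg_6 mg_6r x0_6 mg_7 mg_7r x0_7 mg_8 mg_8r x0_8 mg_9 mg_9r x0_9 mg_10 mg_10r x0_10 mg_11 mg_11r x0_11 mg_12 mg_12r x0_12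

lemma rprod_Cons[simp]: "rprod G x (i # L) d = x i (d i) \<otimes> rprod G x L d"
  by (simp add: rprod_def)
lemma rprod_Nil[simp]: "rprod G x [] d = \<one>"
  by (simp add: rprod_def)

lemma rprod_carrier: "set L \<subseteq> {1..12} \<Longrightarrow> rprod G x L d \<in> carrier G"
  by (induction L) auto

lemma rprod_cong: "(\<And>i. i \<in> set L \<Longrightarrow> d i = d' i) \<Longrightarrow> rprod G x L d = rprod G x L d'"
  by (induction L) auto

lemma rprod_filter: "set L \<subseteq> {1..12} \<Longrightarrow>
   rprod G x (filter P L) d = rprod G x L (\<lambda>i. if P i then d i else 0)"
proof (induction L)
  case Nil then show ?case by simp
next
  case (Cons i L)
  then have i: "i \<in> {1..12}" and L: "set L \<subseteq> {1..12}" by auto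
  show ?case using Cons.IH[OF L] x0[OF i] rprod_carrier[OF L] i by simp
qed

lemma rprod_zero: "set L \<subseteq> {1..12} \<Longrightarrow> rprod G x L (\<lambda>i. 0) = \<one>"
  by (induction L) (auto simp: x0)

lemma rprod_single: "set L \<subseteq> {1..12} \<Longrightarrow> distinct L \<Longrightarrow> j \<in> set L \<Longrightarrow>
   rprod G x L (\<lambda>i. if i = j then t else 0) = x j t"
proof (induction L)
  case Nil then show ?case by simp
next
  case (Cons i L)
  then have i: "i \<in> {1..12}" and L: "set L \<subseteq> {1..12}" by auto
  show ?case
  proof (cases "i = j")
    case True
    then have "j \<notin> set L" using Cons by auto
    then have "rprod G x L (\<lambda>i. if i = j then t else 0) = rprod G x L (\<lambda>i. 0)"
      by (intro rprod_cong) auto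
    then show ?thesis using True rprod_zero[OF L] i by simp
  next
    case False
    then show ?thesis using Cons x0[OF i] rprod_carrier[OF L] i L by auto
  qed
qed

definition Dset :: "(nat \<Rightarrow> 'a) set" where "Dset = {d. \<forall>i. i \<notin> {1..12} \<longrightarrow> d i = 0}"

definition nf :: "'g \<Rightarrow> nat \<Rightarrow> 'a" where
  "nf g = the_inv_into Dset (rprod G x [1..<13]) g"

lemma nf_rprod: "d \<in> Dset \<Longrightarrow> nf (rprod G x [1..<13] d) = d"
  unfolding nf_def
  by (rule the_inv_into_f_f) (use U in \<open>auto simp: is_U_D4_def Dset_def bij_betw_def\<close>)

lemma set_upt13: "set [1..<13] = {1..12::nat}" by auto

lemma nf_filter: "a \<in> set (filter P [1..<13]) \<Longrightarrow> nf (rprod G x (filter P [1..<13]) d) a = d a"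
proof -
  assume a: "a \<in> set (filter P [1..<13])"
  have "rprod G x (filter P [1..<13]) d = rprod G x [1..<13] (\<lambda>i. if P i then d i else 0)"
    by (rule rprod_filter) auto
  also have "\<dots> = rprod G x [1..<13] (\<lambda>i. if P i \<and> i \<in> {1..12} then d i else 0)"
    by (rule rprod_cong) auto
  finally have eq: "rprod G x (filter P [1..<13]) d = rprod G x [1..<13] (\<lambda>i. if P i \<and> i \<in> {1..12} then d i else 0)" .
  have D: "(\<lambda>i. if P i \<and> i \<in> {1..12} then d i else 0) \<in> Dset" by (simp add: Dset_def)
  have "nf (rprod G x (filter P [1..<13]) d) = (\<lambda>i. if P i \<and> i \<in> {1..12} then d i else 0)"
    unfolding eq by (rule nf_rprod[OF D])
  then show ?thesis using a by auto
qed

lemma main_generic: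
  fixes \<phi> :: "'a \<Rightarrow> complex"
  assumes Ldef: "filter P [1..<13] = L"
    and a: "a \<in> set L"
    and mul: "\<And>d e. \<exists>D. rprod G x L d \<otimes> rprod G x L e = rprod G x L D \<and> D a = d a + e a"
    and phi: "nontriv_add_char \<phi>"
    and Vdef: "V = {rprod G x (filter P [1..<13]) d | d. True}"
  shows "subgroup V G \<and> Xsub x a \<inter> derived G V = {\<one>}
    \<and> (\<forall>s. s \<noteq> 0 \<longrightarrow> (\<exists>chi. lin_char G V chi \<and> (\<forall>t. chi (x a t) = \<phi> (s * t))
          \<and> (\<forall>j\<in>set L. j \<noteq> a \<longrightarrow> (\<forall>t. x j t \<in> V \<and> chi (x j t) = 1))))"
proof -
  have V: "V = {rprod G x L d | d. True}" using Vdef Ldef by simp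
  have Lsub: "set L \<subseteq> {1..12}" using Ldef[symmetric] by auto
  have Ldist: "distinct L" using Ldef[symmetric] by simp
  have memV: "g \<in> V \<longleftrightarrow> (\<exists>d. g = rprod G x L d)" for g using V by auto
  have Vc: "V \<subseteq> carrier G" using V rprod_carrier[OF Lsub] by auto
  have xV: "j \<in> set L \<Longrightarrow> x j t \<in> V" for j t
    unfolding memV by (rule exI[of _ "\<lambda>i. if i = j then t else 0"]) (simp add: rprod_single[OF Lsub Ldist])
  have oneV: "\<one> \<in> V"
    unfolding memV by (rule exI[of _ "\<lambda>i. 0"]) (simp add: rprod_zero[OF Lsub])
  have mulV: "g \<in> V \<Longrightarrow> h \<in> V \<Longrightarrow> g \<otimes> h \<in> V" for g h
  proof -
    assume "g \<in> V" "h \<in> V"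
    then obtain d e where de: "g = rprod G x L d" "h = rprod G x L e" unfolding memV by blast
    obtain D where "rprod G x L d \<otimes> rprod G x L e = rprod G x L D" using mul[of d e] by blast
    then show ?thesis unfolding memV de by blast
  qed
  have invV0: "set ys \<subseteq> set L \<Longrightarrow> inv (rprod G x ys d) \<in> V" for ys d
  proof (induction ys)
    case Nil then show ?case using oneV by simp
  next
    case (Cons i ys)
    then have i: "i \<in> {1..12}" and ys: "set ys \<subseteq> {1..12}" and iL: "i \<in> set L"
      using Lsub by auto
    have eq: "inv (rprod G x (i # ys) d) = inv (rprod G x ys d) \<otimes> x i (- d i)"
      using rprod_carrier[OF ys] i by (simp add: inv_mult_group xinv)
    have "set ys \<subseteq> set L" using Cons.prems by simp
    then have "inv (rprod G x ys d) \<in> V" by (rule Cons.IH)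
    then show ?case unfolding eq by (rule mulV[OF _ xV[OF iL]])
  qed
  have invV: "g \<in> V \<Longrightarrow> inv g \<in> V" for g
  proof -
    assume "g \<in> V"
    then obtain d where "g = rprod G x L d" unfolding memV by blast
    then show ?thesis using invV0[of L d] by simp
  qed
  have sg: "subgroup V G"
    by (rule subgroupI) (use Vc oneV invV mulV in auto)
  define psi where "psi g = nf g a" for g
  have psi: "psi (rprod G x L d) = d a" for d
    using nf_filter[of a P d, unfolded Ldef] a unfolding psi_def by blast
  have psi_add: "g \<in> V \<Longrightarrow> h \<in> V \<Longrightarrow> psi (g \<otimes> h) = psi g + psi h" for g h
  proof -
    assume "g \<in> V" "h \<in> V"
    then obtain d e where de: "g = rprod G x L d" "h = rprod G x L e" unfolding memV by blast
    obtain D where "rprod G x L d \<otimes> rprod G x L e = rprod G x L D" "D a = d a + e a" using mul[of d e] by blast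
    then show ?thesis unfolding de by (simp add: psi)
  qed
  have psi_one: "psi \<one> = 0" using psi[of "\<lambda>i. 0"] rprod_zero[OF Lsub] by simp
  have psi_inv: "g \<in> V \<Longrightarrow> psi (inv g) = - psi g" for g
  proof -
    assume g: "g \<in> V"
    have "psi g + psi (inv g) = 0" using psi_add[OF g invV[OF g]] g Vc psi_one by auto
    then show ?thesis by (simp add: eq_neg_iff_add_eq_0 add.commute)
  qed
  have psi_x: "j \<in> set L \<Longrightarrow> psi (x j t) = (if j = a then t else 0)" for j t
    using psi[of "\<lambda>i. if i = j then t else 0"] rprod_single[OF Lsub Ldist, of j t] by auto
  define K where "K = {g \<in> V. psi g = 0}"
  have sgK: "subgroup K G"
    by (rule subgroupI) (use Vc oneV invV mulV psi_one psi_inv psi_add in \<open>auto simp: K_def\<close>)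
  have dK: "derived_set G V \<subseteq> K"
  proof
    fix g assume "g \<in> derived_set G V"
    then obtain h1 h2 where h: "h1 \<in> V" "h2 \<in> V" and g: "g = h1 \<otimes> h2 \<otimes> inv h1 \<otimes> inv h2" by blast
    have "g \<in> V" using g h mulV invV by auto
    moreover have "psi g = 0" using g h mulV invV psi_add psi_inv by simp
    ultimately show "g \<in> K" by (simp add: K_def)
  qed
  have derK: "derived G V \<subseteq> K"
    unfolding derived_def by (rule generate_subgroup_incl[OF dK sgK])
  have X: "Xsub x a \<inter> derived G V = {\<one>}"
  proof
    show "Xsub x a \<inter> derived G V \<subseteq> {\<one>}"
    proof
      fix g assume g: "g \<in> Xsub x a \<inter> derived G V"
      then obtain t where t: "g = x a t" by (auto simp: Xsub_def)
      have "psi g = 0" using g derK by (auto simp: K_def)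
      then have "t = 0" using psi_x[OF a] t by simp
      then show "g \<in> {\<one>}" using t x0 a Lsub by auto
    qed
  next
    have "\<one> \<in> Xsub x a" using x0 a Lsub unfolding Xsub_def by (metis rangeI subsetD)
    moreover have "\<one> \<in> derived G V" unfolding derived_def by (rule generate.one)
    ultimately show "{\<one>} \<subseteq> Xsub x a \<inter> derived G V" by simp
  qed
  have phi0: "\<phi> 0 = 1"
  proof -
    have "\<phi> 0 = \<phi> 0 * \<phi> 0" using phi unfolding nontriv_add_char_def by (metis add_0)
    moreover have "\<phi> 0 \<noteq> 0" using phi unfolding nontriv_add_char_def by blast
    ultimately show ?thesis by simp
  qed
  have ch: "\<exists>chi. lin_char G V chi \<and> (\<forall>t. chi (x a t) = \<phi> (s * t))
          \<and> (\<forall>j\<in>set L. j \<noteq> a \<longrightarrow> (\<forall>t. x j t \<in> V \<and> chi (x j t) = 1))" for s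
  proof (intro exI conjI ballI allI impI)
    show "lin_char G V (\<lambda>g. \<phi> (s * psi g))"
      unfolding lin_char_def using phi psi_add
      by (auto simp: nontriv_add_char_def distrib_left)
    show "\<phi> (s * psi (x a t)) = \<phi> (s * t)" for t using psi_x[OF a] by simp
    show "x j t \<in> V" if "j \<in> set L" for j t using xV that by simp
    show "\<phi> (s * psi (x j t)) = 1" if "j \<in> set L" "j \<noteq> a" for j t
      using psi_x[OF that(1)] that phi0 by simp
  qed
  show ?thesis using sg X ch by blast
qed
lemma mul_1: "\<exists>D. rprod G x [1,2,3,4,5,6,7,8,9,10,11,12] d \<otimes> rprod G x [1,2,3,4,5,6,7,8,9,10,11,12] e = rprod G x [1,2,3,4,5,6,7,8,9,10,11,12] D \<and> D 1 = d 1 + e 1"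
proof -
  have "\<exists>y1 y2 y3 y4 y5 y6 y7 y8 y9 y10 y11 y12. rprod G x [1,2,3,4,5,6,7,8,9,10,11,12] d \<otimes> rprod G x [1,2,3,4,5,6,7,8,9,10,11,12] e = x 1 y1 \<otimes> (x 2 y2 \<otimes> (x 3 y3 \<otimes> (x 4 y4 \<otimes> (x 5 y5 \<otimes> (x 6 y6 \<otimes> (x 7 y7 \<otimes> (x 8 y8 \<otimes> (x 9 y9 \<otimes> (x 10 y10 \<otimes> (x 11 y11 \<otimes> (x 12 y12))))))))))) \<and> y1 = d 1 + e 1"
    by (simp add: collect m_assoc del: One_nat_def) ((rule exI)+, rule refl)
  then obtain y1 y2 y3 y4 y5 y6 y7 y8 y9 y10 y11 y12 where eq: "rprod G x [1,2,3,4,5,6,7,8,9,10,11,12] d \<otimes> rprod G x [1,2,3,4,5,6,7,8,9,10,11,12] e = x 1 y1 \<otimes> (x 2 y2 \<otimes> (x 3 y3 \<otimes> (x 4 y4 \<otimes> (x 5 y5 \<otimes> (x 6 y6 \<otimes> (x 7 y7 \<otimes> (x 8 y8 \<otimes> (x 9 y9 \<otimes> (x 10 y10 \<otimes> (x 11 y11 \<otimes> (x 12 y12)))))))))))" and ya: "y1 = d 1 + e 1"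
    by blast
  show ?thesis
    by (rule exI[of _ "\<lambda>i. if i = 1 then y1 else if i = 2 then y2 else if i = 3 then y3 else if i = 4 then y4 else if i = 5 then y5 else if i = 6 then y6 else if i = 7 then y7 else if i = 8 then y8 else if i = 9 then y9 else if i = 10 then y10 else if i = 11 then y11 else y12"], unfold eq, simp add: ya)
qed

lemma mul_2: "\<exists>D. rprod G x [1,2,3,4,5,6,7,8,9,10,11,12] d \<otimes> rprod G x [1,2,3,4,5,6,7,8,9,10,11,12] e = rprod G x [1,2,3,4,5,6,7,8,9,10,11,12] D \<and> D 2 = d 2 + e 2"
proof -
  have "\<exists>y1 y2 y3 y4 y5 y6 y7 y8 y9 y10 y11 y12. rprod G x [1,2,3,4,5,6,7,8,9,10,11,12] d \<otimes> rprod G x [1,2,3,4,5,6,7,8,9,10,11,12] e = x 1 y1 \<otimes> (x 2 y2 \<otimes> (x 3 y3 \<otimes> (x 4 y4 \<otimes> (x 5 y5 \<otimes> (x 6 y6 \<otimes> (x 7 y7 \<otimes> (x 8 y8 \<otimes> (x 9 y9 \<otimes> (x 10 y10 \<otimes> (x 11 y11 \<otimes> (x 12 y12))))))))))) \<and> y2 = d 2 + e 2"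
    by (simp add: collect m_assoc del: One_nat_def) ((rule exI)+, rule refl)
  then obtain y1 y2 y3 y4 y5 y6 y7 y8 y9 y10 y11 y12 where eq: "rprod G x [1,2,3,4,5,6,7,8,9,10,11,12] d \<otimes> rprod G x [1,2,3,4,5,6,7,8,9,10,11,12] e = x 1 y1 \<otimes> (x 2 y2 \<otimes> (x 3 y3 \<otimes> (x 4 y4 \<otimes> (x 5 y5 \<otimes> (x 6 y6 \<otimes> (x 7 y7 \<otimes> (x 8 y8 \<otimes> (x 9 y9 \<otimes> (x 10 y10 \<otimes> (x 11 y11 \<otimes> (x 12 y12)))))))))))" and ya: "y2 = d 2 + e 2"
    by blast
  show ?thesis
    by (rule exI[of _ "\<lambda>i. if i = 1 then y1 else if i = 2 then y2 else if i = 3 then y3 else if i = 4 then y4 else if i = 5 then y5 else if i = 6 then y6 else if i = 7 then y7 else if i = 8 then y8 else if i = 9 then y9 else if i = 10 then y10 else if i = 11 then y11 else y12"], unfold eq, simp add: ya)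
qed

lemma mul_3: "\<exists>D. rprod G x [1,2,3,4,5,6,7,8,9,10,11,12] d \<otimes> rprod G x [1,2,3,4,5,6,7,8,9,10,11,12] e = rprod G x [1,2,3,4,5,6,7,8,9,10,11,12] D \<and> D 3 = d 3 + e 3"
proof -
  have "\<exists>y1 y2 y3 y4 y5 y6 y7 y8 y9 y10 y11 y12. rprod G x [1,2,3,4,5,6,7,8,9,10,11,12] d \<otimes> rprod G x [1,2,3,4,5,6,7,8,9,10,11,12] e = x 1 y1 \<otimes> (x 2 y2 \<otimes> (x 3 y3 \<otimes> (x 4 y4 \<otimes> (x 5 y5 \<otimes> (x 6 y6 \<otimes> (x 7 y7 \<otimes> (x 8 y8 \<otimes> (x 9 y9 \<otimes> (x 10 y10 \<otimes> (x 11 y11 \<otimes> (x 12 y12))))))))))) \<and> y3 = d 3 + e 3"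
    by (simp add: collect m_assoc del: One_nat_def) ((rule exI)+, rule refl)
  then obtain y1 y2 y3 y4 y5 y6 y7 y8 y9 y10 y11 y12 where eq: "rprod G x [1,2,3,4,5,6,7,8,9,10,11,12] d \<otimes> rprod G x [1,2,3,4,5,6,7,8,9,10,11,12] e = x 1 y1 \<otimes> (x 2 y2 \<otimes> (x 3 y3 \<otimes> (x 4 y4 \<otimes> (x 5 y5 \<otimes> (x 6 y6 \<otimes> (x 7 y7 \<otimes> (x 8 y8 \<otimes> (x 9 y9 \<otimes> (x 10 y10 \<otimes> (x 11 y11 \<otimes> (x 12 y12)))))))))))" and ya: "y3 = d 3 + e 3"
    by blast
  show ?thesis
    by (rule exI[of _ "\<lambda>i. if i = 1 then y1 else if i = 2 then y2 else if i = 3 then y3 else if i = 4 then y4 else if i = 5 then y5 else if i = 6 then y6 else if i = 7 then y7 else if i = 8 then y8 else if i = 9 then y9 else if i = 10 then y10 else if i = 11 then y11 else y12"], unfold eq, simp add: ya)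
qed

lemma mul_4: "\<exists>D. rprod G x [1,2,3,4,5,6,7,8,9,10,11,12] d \<otimes> rprod G x [1,2,3,4,5,6,7,8,9,10,11,12] e = rprod G x [1,2,3,4,5,6,7,8,9,10,11,12] D \<and> D 4 = d 4 + e 4"
proof -
  have "\<exists>y1 y2 y3 y4 y5 y6 y7 y8 y9 y10 y11 y12. rprod G x [1,2,3,4,5,6,7,8,9,10,11,12] d \<otimes> rprod G x [1,2,3,4,5,6,7,8,9,10,11,12] e = x 1 y1 \<otimes> (x 2 y2 \<otimes> (x 3 y3 \<otimes> (x 4 y4 \<otimes> (x 5 y5 \<otimes> (x 6 y6 \<otimes> (x 7 y7 \<otimes> (x 8 y8 \<otimes> (x 9 y9 \<otimes> (x 10 y10 \<otimes> (x 11 y11 \<otimes> (x 12 y12))))))))))) \<and> y4 = d 4 + e 4"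
    by (simp add: collect m_assoc del: One_nat_def) ((rule exI)+, rule refl)
  then obtain y1 y2 y3 y4 y5 y6 y7 y8 y9 y10 y11 y12 where eq: "rprod G x [1,2,3,4,5,6,7,8,9,10,11,12] d \<otimes> rprod G x [1,2,3,4,5,6,7,8,9,10,11,12] e = x 1 y1 \<otimes> (x 2 y2 \<otimes> (x 3 y3 \<otimes> (x 4 y4 \<otimes> (x 5 y5 \<otimes> (x 6 y6 \<otimes> (x 7 y7 \<otimes> (x 8 y8 \<otimes> (x 9 y9 \<otimes> (x 10 y10 \<otimes> (x 11 y11 \<otimes> (x 12 y12)))))))))))" and ya: "y4 = d 4 + e 4"
    by blast
  show ?thesis
    by (rule exI[of _ "\<lambda>i. if i = 1 then y1 else if i = 2 then y2 else if i = 3 then y3 else if i = 4 then y4 else if i = 5 then y5 else if i = 6 then y6 else if i = 7 then y7 else if i = 8 then y8 else if i = 9 then y9 else if i = 10 then y10 else if i = 11 then y11 else y12"], unfold eq, simp add: ya)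
qed

lemma mul_5: "\<exists>D. rprod G x [2,3,4,5,6,7,8,9,10,11,12] d \<otimes> rprod G x [2,3,4,5,6,7,8,9,10,11,12] e = rprod G x [2,3,4,5,6,7,8,9,10,11,12] D \<and> D 5 = d 5 + e 5"
proof -
  have "\<exists>y2 y3 y4 y5 y6 y7 y8 y9 y10 y11 y12. rprod G x [2,3,4,5,6,7,8,9,10,11,12] d \<otimes> rprod G x [2,3,4,5,6,7,8,9,10,11,12] e = x 2 y2 \<otimes> (x 3 y3 \<otimes> (x 4 y4 \<otimes> (x 5 y5 \<otimes> (x 6 y6 \<otimes> (x 7 y7 \<otimes> (x 8 y8 \<otimes> (x 9 y9 \<otimes> (x 10 y10 \<otimes> (x 11 y11 \<otimes> (x 12 y12)))))))))) \<and> y5 = d 5 + e 5"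
    by (simp add: collect m_assoc del: One_nat_def) ((rule exI)+, rule refl)
  then obtain y2 y3 y4 y5 y6 y7 y8 y9 y10 y11 y12 where eq: "rprod G x [2,3,4,5,6,7,8,9,10,11,12] d \<otimes> rprod G x [2,3,4,5,6,7,8,9,10,11,12] e = x 2 y2 \<otimes> (x 3 y3 \<otimes> (x 4 y4 \<otimes> (x 5 y5 \<otimes> (x 6 y6 \<otimes> (x 7 y7 \<otimes> (x 8 y8 \<otimes> (x 9 y9 \<otimes> (x 10 y10 \<otimes> (x 11 y11 \<otimes> (x 12 y12))))))))))" and ya: "y5 = d 5 + e 5"
    by blast
  show ?thesis
    by (rule exI[of _ "\<lambda>i. if i = 2 then y2 else if i = 3 then y3 else if i = 4 then y4 else if i = 5 then y5 else if i = 6 then y6 else if i = 7 then y7 else if i = 8 then y8 else if i = 9 then y9 else if i = 10 then y10 else if i = 11 then y11 else y12"], unfold eq, simp add: ya)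
qed

lemma mul_6: "\<exists>D. rprod G x [1,3,4,5,6,7,8,9,10,11,12] d \<otimes> rprod G x [1,3,4,5,6,7,8,9,10,11,12] e = rprod G x [1,3,4,5,6,7,8,9,10,11,12] D \<and> D 6 = d 6 + e 6"
proof -
  have "\<exists>y1 y3 y4 y5 y6 y7 y8 y9 y10 y11 y12. rprod G x [1,3,4,5,6,7,8,9,10,11,12] d \<otimes> rprod G x [1,3,4,5,6,7,8,9,10,11,12] e = x 1 y1 \<otimes> (x 3 y3 \<otimes> (x 4 y4 \<otimes> (x 5 y5 \<otimes> (x 6 y6 \<otimes> (x 7 y7 \<otimes> (x 8 y8 \<otimes> (x 9 y9 \<otimes> (x 10 y10 \<otimes> (x 11 y11 \<otimes> (x 12 y12)))))))))) \<and> y6 = d 6 + e 6"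
    by (simp add: collect m_assoc del: One_nat_def) ((rule exI)+, rule refl)
  then obtain y1 y3 y4 y5 y6 y7 y8 y9 y10 y11 y12 where eq: "rprod G x [1,3,4,5,6,7,8,9,10,11,12] d \<otimes> rprod G x [1,3,4,5,6,7,8,9,10,11,12] e = x 1 y1 \<otimes> (x 3 y3 \<otimes> (x 4 y4 \<otimes> (x 5 y5 \<otimes> (x 6 y6 \<otimes> (x 7 y7 \<otimes> (x 8 y8 \<otimes> (x 9 y9 \<otimes> (x 10 y10 \<otimes> (x 11 y11 \<otimes> (x 12 y12))))))))))" and ya: "y6 = d 6 + e 6"
    by blast
  show ?thesis
    by (rule exI[of _ "\<lambda>i. if i = 1 then y1 else if i = 3 then y3 else if i = 4 then y4 else if i = 5 then y5 else if i = 6 then y6 else if i = 7 then y7 else if i = 8 then y8 else if i = 9 then y9 else if i = 10 then y10 else if i = 11 then y11 else y12"], unfold eq, simp add: ya)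
qed

lemma mul_7: "\<exists>D. rprod G x [1,2,3,5,6,7,8,9,10,11,12] d \<otimes> rprod G x [1,2,3,5,6,7,8,9,10,11,12] e = rprod G x [1,2,3,5,6,7,8,9,10,11,12] D \<and> D 7 = d 7 + e 7"
proof -
  have "\<exists>y1 y2 y3 y5 y6 y7 y8 y9 y10 y11 y12. rprod G x [1,2,3,5,6,7,8,9,10,11,12] d \<otimes> rprod G x [1,2,3,5,6,7,8,9,10,11,12] e = x 1 y1 \<otimes> (x 2 y2 \<otimes> (x 3 y3 \<otimes> (x 5 y5 \<otimes> (x 6 y6 \<otimes> (x 7 y7 \<otimes> (x 8 y8 \<otimes> (x 9 y9 \<otimes> (x 10 y10 \<otimes> (x 11 y11 \<otimes> (x 12 y12)))))))))) \<and> y7 = d 7 + e 7"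
    by (simp add: collect m_assoc del: One_nat_def) ((rule exI)+, rule refl)
  then obtain y1 y2 y3 y5 y6 y7 y8 y9 y10 y11 y12 where eq: "rprod G x [1,2,3,5,6,7,8,9,10,11,12] d \<otimes> rprod G x [1,2,3,5,6,7,8,9,10,11,12] e = x 1 y1 \<otimes> (x 2 y2 \<otimes> (x 3 y3 \<otimes> (x 5 y5 \<otimes> (x 6 y6 \<otimes> (x 7 y7 \<otimes> (x 8 y8 \<otimes> (x 9 y9 \<otimes> (x 10 y10 \<otimes> (x 11 y11 \<otimes> (x 12 y12))))))))))" and ya: "y7 = d 7 + e 7"
    by blast
  show ?thesis
    by (rule exI[of _ "\<lambda>i. if i = 1 then y1 else if i = 2 then y2 else if i = 3 then y3 else if i = 5 then y5 else if i = 6 then y6 else if i = 7 then y7 else if i = 8 then y8 else if i = 9 then y9 else if i = 10 then y10 else if i = 11 then y11 else y12"], unfold eq, simp add: ya)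
qed

lemma mul_8: "\<exists>D. rprod G x [3,4,5,6,7,8,9,10,11,12] d \<otimes> rprod G x [3,4,5,6,7,8,9,10,11,12] e = rprod G x [3,4,5,6,7,8,9,10,11,12] D \<and> D 8 = d 8 + e 8"
proof -
  have "\<exists>y3 y4 y5 y6 y7 y8 y9 y10 y11 y12. rprod G x [3,4,5,6,7,8,9,10,11,12] d \<otimes> rprod G x [3,4,5,6,7,8,9,10,11,12] e = x 3 y3 \<otimes> (x 4 y4 \<otimes> (x 5 y5 \<otimes> (x 6 y6 \<otimes> (x 7 y7 \<otimes> (x 8 y8 \<otimes> (x 9 y9 \<otimes> (x 10 y10 \<otimes> (x 11 y11 \<otimes> (x 12 y12))))))))) \<and> y8 = d 8 + e 8"
    by (simp add: collect m_assoc del: One_nat_def) ((rule exI)+, rule refl)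
  then obtain y3 y4 y5 y6 y7 y8 y9 y10 y11 y12 where eq: "rprod G x [3,4,5,6,7,8,9,10,11,12] d \<otimes> rprod G x [3,4,5,6,7,8,9,10,11,12] e = x 3 y3 \<otimes> (x 4 y4 \<otimes> (x 5 y5 \<otimes> (x 6 y6 \<otimes> (x 7 y7 \<otimes> (x 8 y8 \<otimes> (x 9 y9 \<otimes> (x 10 y10 \<otimes> (x 11 y11 \<otimes> (x 12 y12)))))))))" and ya: "y8 = d 8 + e 8"
    by blast
  show ?thesis
    by (rule exI[of _ "\<lambda>i. if i = 3 then y3 else if i = 4 then y4 else if i = 5 then y5 else if i = 6 then y6 else if i = 7 then y7 else if i = 8 then y8 else if i = 9 then y9 else if i = 10 then y10 else if i = 11 then y11 else y12"], unfold eq, simp add: ya)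
qed

lemma mul_9: "\<exists>D. rprod G x [2,3,5,6,7,8,9,10,11,12] d \<otimes> rprod G x [2,3,5,6,7,8,9,10,11,12] e = rprod G x [2,3,5,6,7,8,9,10,11,12] D \<and> D 9 = d 9 + e 9"
proof -
  have "\<exists>y2 y3 y5 y6 y7 y8 y9 y10 y11 y12. rprod G x [2,3,5,6,7,8,9,10,11,12] d \<otimes> rprod G x [2,3,5,6,7,8,9,10,11,12] e = x 2 y2 \<otimes> (x 3 y3 \<otimes> (x 5 y5 \<otimes> (x 6 y6 \<otimes> (x 7 y7 \<otimes> (x 8 y8 \<otimes> (x 9 y9 \<otimes> (x 10 y10 \<otimes> (x 11 y11 \<otimes> (x 12 y12))))))))) \<and> y9 = d 9 + e 9"
    by (simp add: collect m_assoc del: One_nat_def) ((rule exI)+, rule refl)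
  then obtain y2 y3 y5 y6 y7 y8 y9 y10 y11 y12 where eq: "rprod G x [2,3,5,6,7,8,9,10,11,12] d \<otimes> rprod G x [2,3,5,6,7,8,9,10,11,12] e = x 2 y2 \<otimes> (x 3 y3 \<otimes> (x 5 y5 \<otimes> (x 6 y6 \<otimes> (x 7 y7 \<otimes> (x 8 y8 \<otimes> (x 9 y9 \<otimes> (x 10 y10 \<otimes> (x 11 y11 \<otimes> (x 12 y12)))))))))" and ya: "y9 = d 9 + e 9"
    by blast
  show ?thesis
    by (rule exI[of _ "\<lambda>i. if i = 2 then y2 else if i = 3 then y3 else if i = 5 then y5 else if i = 6 then y6 else if i = 7 then y7 else if i = 8 then y8 else if i = 9 then y9 else if i = 10 then y10 else if i = 11 then y11 else y12"], unfold eq, simp add: ya)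
qed

lemma mul_10: "\<exists>D. rprod G x [1,3,5,6,7,8,9,10,11,12] d \<otimes> rprod G x [1,3,5,6,7,8,9,10,11,12] e = rprod G x [1,3,5,6,7,8,9,10,11,12] D \<and> D 10 = d 10 + e 10"
proof -
  have "\<exists>y1 y3 y5 y6 y7 y8 y9 y10 y11 y12. rprod G x [1,3,5,6,7,8,9,10,11,12] d \<otimes> rprod G x [1,3,5,6,7,8,9,10,11,12] e = x 1 y1 \<otimes> (x 3 y3 \<otimes> (x 5 y5 \<otimes> (x 6 y6 \<otimes> (x 7 y7 \<otimes> (x 8 y8 \<otimes> (x 9 y9 \<otimes> (x 10 y10 \<otimes> (x 11 y11 \<otimes> (x 12 y12))))))))) \<and> y10 = d 10 + e 10"
    by (simp add: collect m_assoc del: One_nat_def) ((rule exI)+, rule refl)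
  then obtain y1 y3 y5 y6 y7 y8 y9 y10 y11 y12 where eq: "rprod G x [1,3,5,6,7,8,9,10,11,12] d \<otimes> rprod G x [1,3,5,6,7,8,9,10,11,12] e = x 1 y1 \<otimes> (x 3 y3 \<otimes> (x 5 y5 \<otimes> (x 6 y6 \<otimes> (x 7 y7 \<otimes> (x 8 y8 \<otimes> (x 9 y9 \<otimes> (x 10 y10 \<otimes> (x 11 y11 \<otimes> (x 12 y12)))))))))" and ya: "y10 = d 10 + e 10"
    by blast
  show ?thesis
    by (rule exI[of _ "\<lambda>i. if i = 1 then y1 else if i = 3 then y3 else if i = 5 then y5 else if i = 6 then y6 else if i = 7 then y7 else if i = 8 then y8 else if i = 9 then y9 else if i = 10 then y10 else if i = 11 then y11 else y12"], unfold eq, simp add: ya)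
qed

lemma mul_11: "\<exists>D. rprod G x [3,5,6,7,8,9,10,11,12] d \<otimes> rprod G x [3,5,6,7,8,9,10,11,12] e = rprod G x [3,5,6,7,8,9,10,11,12] D \<and> D 11 = d 11 + e 11"
proof -
  have "\<exists>y3 y5 y6 y7 y8 y9 y10 y11 y12. rprod G x [3,5,6,7,8,9,10,11,12] d \<otimes> rprod G x [3,5,6,7,8,9,10,11,12] e = x 3 y3 \<otimes> (x 5 y5 \<otimes> (x 6 y6 \<otimes> (x 7 y7 \<otimes> (x 8 y8 \<otimes> (x 9 y9 \<otimes> (x 10 y10 \<otimes> (x 11 y11 \<otimes> (x 12 y12)))))))) \<and> y11 = d 11 + e 11"
    by (simp add: collect m_assoc del: One_nat_def) ((rule exI)+, rule refl)
  then obtain y3 y5 y6 y7 y8 y9 y10 y11 y12 where eq: "rprod G x [3,5,6,7,8,9,10,11,12] d \<otimes> rprod G x [3,5,6,7,8,9,10,11,12] e = x 3 y3 \<otimes> (x 5 y5 \<otimes> (x 6 y6 \<otimes> (x 7 y7 \<otimes> (x 8 y8 \<otimes> (x 9 y9 \<otimes> (x 10 y10 \<otimes> (x 11 y11 \<otimes> (x 12 y12))))))))" and ya: "y11 = d 11 + e 11"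
    by blast
  show ?thesis
    by (rule exI[of _ "\<lambda>i. if i = 3 then y3 else if i = 5 then y5 else if i = 6 then y6 else if i = 7 then y7 else if i = 8 then y8 else if i = 9 then y9 else if i = 10 then y10 else if i = 11 then y11 else y12"], unfold eq, simp add: ya)
qed

lemma mul_12: "\<exists>D. rprod G x [1,2,4,8,9,10,11,12] d \<otimes> rprod G x [1,2,4,8,9,10,11,12] e = rprod G x [1,2,4,8,9,10,11,12] D \<and> D 12 = d 12 + e 12"
proof -
  have "\<exists>y1 y2 y4 y8 y9 y10 y11 y12. rprod G x [1,2,4,8,9,10,11,12] d \<otimes> rprod G x [1,2,4,8,9,10,11,12] e = x 1 y1 \<otimes> (x 2 y2 \<otimes> (x 4 y4 \<otimes> (x 8 y8 \<otimes> (x 9 y9 \<otimes> (x 10 y10 \<otimes> (x 11 y11 \<otimes> (x 12 y12))))))) \<and> y12 = d 12 + e 12"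
    by (simp add: collect m_assoc del: One_nat_def) ((rule exI)+, rule refl)
  then obtain y1 y2 y4 y8 y9 y10 y11 y12 where eq: "rprod G x [1,2,4,8,9,10,11,12] d \<otimes> rprod G x [1,2,4,8,9,10,11,12] e = x 1 y1 \<otimes> (x 2 y2 \<otimes> (x 4 y4 \<otimes> (x 8 y8 \<otimes> (x 9 y9 \<otimes> (x 10 y10 \<otimes> (x 11 y11 \<otimes> (x 12 y12)))))))" and ya: "y12 = d 12 + e 12"
    by blast
  show ?thesis
    by (rule exI[of _ "\<lambda>i. if i = 1 then y1 else if i = 2 then y2 else if i = 4 then y4 else if i = 8 then y8 else if i = 9 then y9 else if i = 10 then y10 else if i = 11 then y11 else y12"], unfold eq, simp add: ya)
qed


end


definition RL :: "int list list" where
  "RL = [[1,0,0,0],[0,1,0,0],[0,0,1,0],[0,0,0,1],[1,0,1,0],[0,1,1,0],[0,0,1,1],[1,1,1,0],[1,0,1,1],[0,1,1,1],[1,1,1,1],[1,1,2,1]]"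

lemma upt13: "[1..<13] = [1,2,3,4,5,6,7,8,9,10,11,12::nat]"
  by (simp add: upt_rec)

lemma Phi_plus_RL: "Phi_plus = set RL"
  unfolding Phi_plus_def RL_def atLeastAtMost_upt
  by (auto simp: upt_rec pos_root_def)

lemma Phi_RL: "Phi = set (RL @ map (map uminus) RL)"
  unfolding Phi_def Phi_plus_RL by simp

lemma mem_hook: "g \<in> hook al \<longleftrightarrow> g \<in> set RL \<and> (\<exists>h\<in>set (RL @ [[0,0,0,0]]). radd g h = al)"
  unfolding hook_def Phi_plus_RL rzero_def by auto

lemma S_eq: "Phi_plus - B = set (filter (\<lambda>g. g \<notin> B) RL)"
  unfolding Phi_plus_RL by auto

lemma closed_list: "closed (set l) \<longleftrightarrow> l \<noteq> [] \<and> list_all (\<lambda>g. g \<in> Phi) l \<and>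
   list_all (\<lambda>a. list_all (\<lambda>b. radd a b \<in> set l \<or> radd a b \<notin> Phi) l) l"
  unfolding closed_def by (auto simp: list_all_iff)

lemma ball12: "(\<forall>j\<in>{1..12::nat}. P j) \<longleftrightarrow> list_all P [1,2,3,4,5,6,7,8,9,10,11,12]"
proof -
  have "{1..12::nat} = set [1..<13]" by auto
  then show ?thesis unfolding upt13 by (simp add: list_all_iff)
qed

lemmas comp_simps = S_eq mem_hook leg_def arm_def Phi_RL RL_def pos_root_def radd_def closed_list upt13 ht_def

lemma comp_1:
  "filter (\<lambda>i. pos_root i \<in> Phi_plus - leg (pos_root 1)) [1..<13] = [1,2,3,4,5,6,7,8,9,10,11,12]"
  "closed (Phi_plus - leg (pos_root 1))"
  "\<forall>j\<in>{1..12}. ht (pos_root j) > ht (pos_root 1) \<longrightarrow> j \<in> set [1,2,3,4,5,6,7,8,9,10,11,12] \<and> j \<noteq> 1"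
  subgoal unfolding upt13 by (simp add: comp_simps)
  subgoal unfolding S_eq closed_list by (simp add: comp_simps)
  subgoal unfolding ball12 by (simp add: ht_def pos_root_def)
  done

lemma comp_2:
  "filter (\<lambda>i. pos_root i \<in> Phi_plus - leg (pos_root 2)) [1..<13] = [1,2,3,4,5,6,7,8,9,10,11,12]"
  "closed (Phi_plus - leg (pos_root 2))"
  "\<forall>j\<in>{1..12}. ht (pos_root j) > ht (pos_root 2) \<longrightarrow> j \<in> set [1,2,3,4,5,6,7,8,9,10,11,12] \<and> j \<noteq> 2"
  subgoal unfolding upt13 by (simp add: comp_simps)
  subgoal unfolding S_eq closed_list by (simp add: comp_simps)
  subgoal unfolding ball12 by (simp add: ht_def pos_root_def)
  done

lemma comp_3:
  "filter (\<lambda>i. pos_root i \<in> Phi_plus - leg (pos_root 3)) [1..<13] = [1,2,3,4,5,6,7,8,9,10,11,12]"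
  "closed (Phi_plus - leg (pos_root 3))"
  "\<forall>j\<in>{1..12}. ht (pos_root j) > ht (pos_root 3) \<longrightarrow> j \<in> set [1,2,3,4,5,6,7,8,9,10,11,12] \<and> j \<noteq> 3"
  subgoal unfolding upt13 by (simp add: comp_simps)
  subgoal unfolding S_eq closed_list by (simp add: comp_simps)
  subgoal unfolding ball12 by (simp add: ht_def pos_root_def)
  done

lemma comp_4:
  "filter (\<lambda>i. pos_root i \<in> Phi_plus - leg (pos_root 4)) [1..<13] = [1,2,3,4,5,6,7,8,9,10,11,12]"
  "closed (Phi_plus - leg (pos_root 4))"
  "\<forall>j\<in>{1..12}. ht (pos_root j) > ht (pos_root 4) \<longrightarrow> j \<in> set [1,2,3,4,5,6,7,8,9,10,11,12] \<and> j \<noteq> 4"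
  subgoal unfolding upt13 by (simp add: comp_simps)
  subgoal unfolding S_eq closed_list by (simp add: comp_simps)
  subgoal unfolding ball12 by (simp add: ht_def pos_root_def)
  done

lemma comp_5:
  "filter (\<lambda>i. pos_root i \<in> Phi_plus - leg (pos_root 5)) [1..<13] = [2,3,4,5,6,7,8,9,10,11,12]"
  "closed (Phi_plus - leg (pos_root 5))"
  "\<forall>j\<in>{1..12}. ht (pos_root j) > ht (pos_root 5) \<longrightarrow> j \<in> set [2,3,4,5,6,7,8,9,10,11,12] \<and> j \<noteq> 5"
  subgoal unfolding upt13 by (simp add: comp_simps)
  subgoal unfolding S_eq closed_list by (simp add: comp_simps)
  subgoal unfolding ball12 by (simp add: ht_def pos_root_def)
  done

lemma comp_6:
  "filter (\<lambda>i. pos_root i \<in> Phi_plus - leg (pos_root 6)) [1..<13] = [1,3,4,5,6,7,8,9,10,11,12]"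
  "closed (Phi_plus - leg (pos_root 6))"
  "\<forall>j\<in>{1..12}. ht (pos_root j) > ht (pos_root 6) \<longrightarrow> j \<in> set [1,3,4,5,6,7,8,9,10,11,12] \<and> j \<noteq> 6"
  subgoal unfolding upt13 by (simp add: comp_simps)
  subgoal unfolding S_eq closed_list by (simp add: comp_simps)
  subgoal unfolding ball12 by (simp add: ht_def pos_root_def)
  done

lemma comp_7:
  "filter (\<lambda>i. pos_root i \<in> Phi_plus - leg (pos_root 7)) [1..<13] = [1,2,3,5,6,7,8,9,10,11,12]"
  "closed (Phi_plus - leg (pos_root 7))"
  "\<forall>j\<in>{1..12}. ht (pos_root j) > ht (pos_root 7) \<longrightarrow> j \<in> set [1,2,3,5,6,7,8,9,10,11,12] \<and> j \<noteq> 7"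
  subgoal unfolding upt13 by (simp add: comp_simps)
  subgoal unfolding S_eq closed_list by (simp add: comp_simps)
  subgoal unfolding ball12 by (simp add: ht_def pos_root_def)
  done

lemma comp_8:
  "filter (\<lambda>i. pos_root i \<in> Phi_plus - leg (pos_root 8)) [1..<13] = [3,4,5,6,7,8,9,10,11,12]"
  "closed (Phi_plus - leg (pos_root 8))"
  "\<forall>j\<in>{1..12}. ht (pos_root j) > ht (pos_root 8) \<longrightarrow> j \<in> set [3,4,5,6,7,8,9,10,11,12] \<and> j \<noteq> 8"
  subgoal unfolding upt13 by (simp add: comp_simps)
  subgoal unfolding S_eq closed_list by (simp add: comp_simps)
  subgoal unfolding ball12 by (simp add: ht_def pos_root_def)
  done

lemma comp_9:
  "filter (\<lambda>i. pos_root i \<in> Phi_plus - leg (pos_root 9)) [1..<13] = [2,3,5,6,7,8,9,10,11,12]"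
  "closed (Phi_plus - leg (pos_root 9))"
  "\<forall>j\<in>{1..12}. ht (pos_root j) > ht (pos_root 9) \<longrightarrow> j \<in> set [2,3,5,6,7,8,9,10,11,12] \<and> j \<noteq> 9"
  subgoal unfolding upt13 by (simp add: comp_simps)
  subgoal unfolding S_eq closed_list by (simp add: comp_simps)
  subgoal unfolding ball12 by (simp add: ht_def pos_root_def)
  done

lemma comp_10:
  "filter (\<lambda>i. pos_root i \<in> Phi_plus - leg (pos_root 10)) [1..<13] = [1,3,5,6,7,8,9,10,11,12]"
  "closed (Phi_plus - leg (pos_root 10))"
  "\<forall>j\<in>{1..12}. ht (pos_root j) > ht (pos_root 10) \<longrightarrow> j \<in> set [1,3,5,6,7,8,9,10,11,12] \<and> j \<noteq> 10"
  subgoal unfolding upt13 by (simp add: comp_simps)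
  subgoal unfolding S_eq closed_list by (simp add: comp_simps)
  subgoal unfolding ball12 by (simp add: ht_def pos_root_def)
  done

lemma comp_11:
  "filter (\<lambda>i. pos_root i \<in> Phi_plus - leg (pos_root 11)) [1..<13] = [3,5,6,7,8,9,10,11,12]"
  "closed (Phi_plus - leg (pos_root 11))"
  "\<forall>j\<in>{1..12}. ht (pos_root j) > ht (pos_root 11) \<longrightarrow> j \<in> set [3,5,6,7,8,9,10,11,12] \<and> j \<noteq> 11"
  subgoal unfolding upt13 by (simp add: comp_simps)
  subgoal unfolding S_eq closed_list by (simp add: comp_simps)
  subgoal unfolding ball12 by (simp add: ht_def pos_root_def)
  done

lemma comp_12:
  "filter (\<lambda>i. pos_root i \<in> Phi_plus - leg (pos_root 12)) [1..<13] = [1,2,4,8,9,10,11,12]"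
  "closed (Phi_plus - leg (pos_root 12))"
  "\<forall>j\<in>{1..12}. ht (pos_root j) > ht (pos_root 12) \<longrightarrow> j \<in> set [1,2,4,8,9,10,11,12] \<and> j \<noteq> 12"
  subgoal unfolding upt13 by (simp add: comp_simps)
  subgoal unfolding S_eq closed_list by (simp add: comp_simps)
  subgoal unfolding ball12 by (simp add: ht_def pos_root_def)
  done
theorem lemma3p1:
  fixes G :: "('g, 'b) monoid_scheme"
    and x :: "nat \<Rightarrow> 'a::{field,finite} \<Rightarrow> 'g"
    and \<phi> :: "'a \<Rightarrow> complex"
    and a :: nat
  assumes U: "is_U_D4 G x"
    and phi: "nontriv_add_char \<phi>"
    and a: "a \<in> {1..12}"
  defines "V \<equiv> rootprod G x (Phi_plus - leg (pos_root a))"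
  shows "closed (Phi_plus - leg (pos_root a))
    \<and> subgroup V G
    \<and> Xsub x a \<inter> derived G V = {\<one>\<^bsub>G\<^esub>}
    \<and> (\<forall>s::'a. s \<noteq> 0 \<longrightarrow> (\<exists>chi. lin_char G V chi
          \<and> (\<forall>t. chi (x a t) = \<phi> (s * t))
          \<and> (\<forall>j\<in>{1..12}. ht (pos_root j) > ht (pos_root a) \<longrightarrow>
                (\<forall>t. x j t \<in> V \<and> chi (x j t) = 1))))"
proof -
  interpret UD4 G x by (rule UD4.intro[OF U])
  have gen: "?thesis" if f: "filter (\<lambda>i. pos_root i \<in> Phi_plus - leg (pos_root a)) [1..<13] = L"
    and aL: "a \<in> set L"
    and mul: "\<And>d e. \<exists>D. rprod G x L d \<otimes>\<^bsub>G\<^esub> rprod G x L e = rprod G x L D \<and> D a = d a + e a"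
    and cl: "closed (Phi_plus - leg (pos_root a))"
    and ht: "\<forall>j\<in>{1..12}. ht (pos_root j) > ht (pos_root a) \<longrightarrow> j \<in> set L \<and> j \<noteq> a"
    for L
  proof -
    have Vd: "V = {rprod G x (filter (\<lambda>i. pos_root i \<in> Phi_plus - leg (pos_root a)) [1..<13]) d | d. True}"
      unfolding V_def rootprod_def by simp
    have M: "subgroup V G \<and> Xsub x a \<inter> derived G V = {\<one>\<^bsub>G\<^esub>}
    \<and> (\<forall>s. s \<noteq> 0 \<longrightarrow> (\<exists>chi. lin_char G V chi \<and> (\<forall>t. chi (x a t) = \<phi> (s * t))
          \<and> (\<forall>j\<in>set L. j \<noteq> a \<longrightarrow> (\<forall>t. x j t \<in> V \<and> chi (x j t) = 1))))"
      by (rule main_generic[OF f aL mul phi Vd])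
    show ?thesis using M cl ht by metis
  qed
  have "a \<in> set [1..<13]" using a by auto
  then consider "a = 1" | "a = 2" | "a = 3" | "a = 4" | "a = 5" | "a = 6" | "a = 7" | "a = 8"
    | "a = 9" | "a = 10" | "a = 11" | "a = 12" unfolding upt13 by auto
  then show ?thesis
  proof cases
    case 1
    then have ak: "a = 1" .
    show ?thesis
      apply (rule gen[of "[1,2,3,4,5,6,7,8,9,10,11,12]"])
      subgoal unfolding ak by (rule comp_1(1))
      subgoal unfolding ak by simp
      subgoal unfolding ak by (rule mul_1)
      subgoal unfolding ak by (rule comp_1(2))
      subgoal unfolding ak by (rule comp_1(3))
      done
  next
    case 2
    then have ak: "a = 2" .
    show ?thesis
      apply (rule gen[of "[1,2,3,4,5,6,7,8,9,10,11,12]"])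
      subgoal unfolding ak by (rule comp_2(1))
      subgoal unfolding ak by simp
      subgoal unfolding ak by (rule mul_2)
      subgoal unfolding ak by (rule comp_2(2))
      subgoal unfolding ak by (rule comp_2(3))
      done
  next
    case 3
    then have ak: "a = 3" .
    show ?thesis
      apply (rule gen[of "[1,2,3,4,5,6,7,8,9,10,11,12]"])
      subgoal unfolding ak by (rule comp_3(1))
      subgoal unfolding ak by simp
      subgoal unfolding ak by (rule mul_3)
      subgoal unfolding ak by (rule comp_3(2))
      subgoal unfolding ak by (rule comp_3(3))
      done
  next
    case 4
    then have ak: "a = 4" .
    show ?thesis
      apply (rule gen[of "[1,2,3,4,5,6,7,8,9,10,11,12]"])
      subgoal unfolding ak by (rule comp_4(1))
      subgoal unfolding ak by simp
      subgoal unfolding ak by (rule mul_4)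
      subgoal unfolding ak by (rule comp_4(2))
      subgoal unfolding ak by (rule comp_4(3))
      done
  next
    case 5
    then have ak: "a = 5" .
    show ?thesis
      apply (rule gen[of "[2,3,4,5,6,7,8,9,10,11,12]"])
      subgoal unfolding ak by (rule comp_5(1))
      subgoal unfolding ak by simp
      subgoal unfolding ak by (rule mul_5)
      subgoal unfolding ak by (rule comp_5(2))
      subgoal unfolding ak by (rule comp_5(3))
      done
  next
    case 6
    then have ak: "a = 6" .
    show ?thesis
      apply (rule gen[of "[1,3,4,5,6,7,8,9,10,11,12]"])
      subgoal unfolding ak by (rule comp_6(1))
      subgoal unfolding ak by simp
      subgoal unfolding ak by (rule mul_6)
      subgoal unfolding ak by (rule comp_6(2))
      subgoal unfolding ak by (rule comp_6(3))
      done
  next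
    case 7
    then have ak: "a = 7" .
    show ?thesis
      apply (rule gen[of "[1,2,3,5,6,7,8,9,10,11,12]"])
      subgoal unfolding ak by (rule comp_7(1))
      subgoal unfolding ak by simp
      subgoal unfolding ak by (rule mul_7)
      subgoal unfolding ak by (rule comp_7(2))
      subgoal unfolding ak by (rule comp_7(3))
      done
  next
    case 8
    then have ak: "a = 8" .
    show ?thesis
      apply (rule gen[of "[3,4,5,6,7,8,9,10,11,12]"])
      subgoal unfolding ak by (rule comp_8(1))
      subgoal unfolding ak by simp
      subgoal unfolding ak by (rule mul_8)
      subgoal unfolding ak by (rule comp_8(2))
      subgoal unfolding ak by (rule comp_8(3))
      done
  next
    case 9
    then have ak: "a = 9" .
    show ?thesis
      apply (rule gen[of "[2,3,5,6,7,8,9,10,11,12]"])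
      subgoal unfolding ak by (rule comp_9(1))
      subgoal unfolding ak by simp
      subgoal unfolding ak by (rule mul_9)
      subgoal unfolding ak by (rule comp_9(2))
      subgoal unfolding ak by (rule comp_9(3))
      done
  next
    case 10
    then have ak: "a = 10" .
    show ?thesis
      apply (rule gen[of "[1,3,5,6,7,8,9,10,11,12]"])
      subgoal unfolding ak by (rule comp_10(1))
      subgoal unfolding ak by simp
      subgoal unfolding ak by (rule mul_10)
      subgoal unfolding ak by (rule comp_10(2))
      subgoal unfolding ak by (rule comp_10(3))
      done
  next
    case 11
    then have ak: "a = 11" .
    show ?thesis
      apply (rule gen[of "[3,5,6,7,8,9,10,11,12]"])
      subgoal unfolding ak by (rule comp_11(1))
      subgoal unfolding ak by simp
      subgoal unfolding ak by (rule mul_11)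
      subgoal unfolding ak by (rule comp_11(2))
      subgoal unfolding ak by (rule comp_11(3))
      done
  next
    case 12
    then have ak: "a = 12" .
    show ?thesis
      apply (rule gen[of "[1,2,4,8,9,10,11,12]"])
      subgoal unfolding ak by (rule comp_12(1))
      subgoal unfolding ak by simp
      subgoal unfolding ak by (rule mul_12)
      subgoal unfolding ak by (rule comp_12(2))
      subgoal unfolding ak by (rule comp_12(3))
      done
  qed
qed
end
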